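(* Let $\alpha=\exp\left(\frac{2\pi i}{5}\right)$, let $c,x\in\mathbb{C}$, and let $(a_1,A_1),\dots,(a_p,A_p)$ and $(b_1,B_1),\dots,(b_q,B_q)$ be parameter pairs ($a_j,b_j\in\mathbb{C}$, $A_j,B_j$ nonzero reals) such that all Pochhammer symbols involved are well defined and all series involved converge. Then $$\sum_{k=0}^{4}\alpha^{k}\,{}_p\Psi^{*}_q\left[\begin{array}{c}(a_1,A_1),\dots,(a_p,A_p);\\(b_1,B_1),\dots,(b_q,B_q);\end{array} c(x\alpha^k)^2\right] =\frac{(a_1)_{2A_1}\cdots(a_p)_{2A_p}}{(b_1)_{2B_1}\cdots(b_q)_{2B_q}}\,\frac{5c^2x^4}{2}\;{}_p\Psi^{*}_{q+4}\left[\begin{array}{c}(a_1+2A_1,5A_1),\dots,(a_p+2A_p,5A_p);\\ \left(\tfrac35,1\right),\left(\tfrac45,1\right),\left(\tfrac65,1\right),\left(\tfrac75,1\right),(b_1+2B_1,5B_1),\dots,(b_q+2B_q,5B_q);\end{array}\left(\frac{cx^2}{5}\right)^5\right].$$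
   Context: For $\lambda,\nu\in\mathbb{C}$ the Pochhammer symbol is $(\lambda)_\nu=\Gamma(\lambda+\nu)/\Gamma(\lambda)$ (with $(\lambda)_0=1$). The normalized Fox–Wright function is $${}_p\Psi^{*}_q\left[\begin{array}{c}(\alpha_1,A_1),\dots,(\alpha_p,A_p);\\(\beta_1,B_1),\dots,(\beta_q,B_q);\end{array}z\right]=\sum_{n=0}^{\infty}\frac{(\alpha_1)_{nA_1}\cdots(\alpha_p)_{nA_p}}{(\beta_1)_{nB_1}\cdots(\beta_q)_{nB_q}}\frac{z^n}{n!},$$ where $\alpha_i,\beta_j\in\mathbb{C}$ and $A_i,B_j$ are nonzero reals. Values of parameters and variables for which the expressions do not make sense are excluded. *)

theory Defs
  imports "HOL-Analysis.Analysis"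
begin

definition fpoch :: "complex \<Rightarrow> real \<Rightarrow> complex" where
  "fpoch l v = (if v = 0 then 1 else Gamma (l + complex_of_real v) / Gamma l)"

definition poch_ok :: "complex \<Rightarrow> real \<Rightarrow> bool" where
  "poch_ok l v \<longleftrightarrow> v = 0 \<or> (l \<notin> \<int>\<^sub>\<le>\<^sub>0 \<and> l + complex_of_real v \<notin> \<int>\<^sub>\<le>\<^sub>0)"

definition fw_term :: "(complex \<times> real) list \<Rightarrow> (complex \<times> real) list \<Rightarrow> complex \<Rightarrow> nat \<Rightarrow> complex" where
  "fw_term as bs z n =
     (\<Prod>(a, A)\<leftarrow>as. fpoch a (real n * A)) / (\<Prod>(b, B)\<leftarrow>bs. fpoch b (real n * B))
       * z ^ n / of_nat (fact n)"

definition FoxWright :: "(complex \<times> real) list \<Rightarrow> (complex \<times> real) list \<Rightarrow> complex \<Rightarrow> complex" where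
  "FoxWright as bs z = (\<Sum>n. fw_term as bs z n)"

definition fw_ok :: "(complex \<times> real) list \<Rightarrow> (complex \<times> real) list \<Rightarrow> bool" where
  "fw_ok as bs \<longleftrightarrow>
     (\<forall>(a, A)\<in>set as. A \<noteq> 0 \<and> (\<forall>n::nat. poch_ok a (real n * A))) \<and>
     (\<forall>(b, B)\<in>set bs. B \<noteq> 0 \<and> (\<forall>n::nat. poch_ok b (real n * B)))"

definition fw_shift :: "complex \<times> real \<Rightarrow> complex \<times> real" where
  "fw_shift p = (fst p + 2 * complex_of_real (snd p), 5 * snd p)"

end

theory Submission
  imports Defs
begin

lemma prod_list_split:
  "(\<And>p. p \<in> set xs \<Longrightarrow> f p = g p * h p) \<Longrightarrow>
   (\<Prod>p\<leftarrow>xs. f p) = (\<Prod>p\<leftarrow>xs. g p) * (\<Prod>p\<leftarrow>xs. (h p :: complex))"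
  by (induction xs) (auto simp: mult_ac)

lemma div_split_aux: "(Y::complex) \<noteq> 0 \<Longrightarrow> X / G = Y / G * (X / Y)"
  by (cases "G = 0") (simp_all add: field_simps)

lemma fpoch_split:
  assumes "A \<noteq> 0" "poch_ok a (2*A)"
  shows "fpoch a (real (5*m+2) * A) = fpoch a (2*A) * fpoch (a + 2 * complex_of_real A) (real m * (5*A))"
proof -
  have nz: "Gamma (a + complex_of_real (2*A)) \<noteq> 0"
    using assms by (intro Gamma_nonzero) (auto simp: poch_ok_def)
  have h1: "real (5*m+2) * A \<noteq> 0" using assms(1) by simp
  have h2: "2 * A \<noteq> 0" using assms(1) by simp
  have e2: "a + 2 * complex_of_real A = a + complex_of_real (2*A)" by simp
  show ?thesis
  proof (cases "m = 0")
    case True then show ?thesis by (simp add: fpoch_def)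
  next
    case False
    have h3: "real m * (5*A) \<noteq> 0" using assms(1) False by simp
    have e: "a + complex_of_real (real (5*m+2) * A) = (a + complex_of_real (2*A)) + complex_of_real (real m * (5*A))"
      by (simp add: algebra_simps)
    show ?thesis unfolding fpoch_def e e2 if_not_P[OF h1] if_not_P[OF h2] if_not_P[OF h3]
      by (rule div_split_aux[OF nz])
  qed
qed

lemma fpoch_nat:
  assumes "poch_ok l (real 1 * 1)"
  shows "fpoch l (real m * 1) = pochhammer l m"
proof (cases "m = 0")
  case True then show ?thesis by (simp add: fpoch_def)
next
  case False
  have "l \<notin> \<int>\<^sub>\<le>\<^sub>0" using assms by (simp add: poch_ok_def)
  then show ?thesis using False by (simp add: fpoch_def pochhammer_Gamma)
qed

lemma fact_5:
  "(fact (5*m+2) :: complex) = 2 * 5^(5*m) * (pochhammer (3/5) m * pochhammer (4/5) m * pochhammer (6/5) m * pochhammer (7/5) m) * fact m"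
proof (induction m)
  case 0 then show ?case by (simp add: numeral_2_eq_2)
next
  case (Suc m)
  have "5 * Suc m + 2 = Suc (Suc (Suc (Suc (Suc (5*m+2)))))" by simp
  then have "(fact (5 * Suc m + 2) :: complex) = fact (5*m+2) * (of_nat m*5+3) * (of_nat m*5+4) * (of_nat m*5+5) * (of_nat m*5+6) * (of_nat m*5+7)"
    by (simp only: fact_Suc) (simp add: algebra_simps)
  also have "\<dots> = fact (5*m+2) * (5^5 * ((3/5 + of_nat m) * (4/5 + of_nat m) * (of_nat m + 1) * (6/5 + of_nat m) * (7/5 + of_nat m)))"
  proof -
    have "\<And>y::complex. (y*5+3) * (y*5+4) * (y*5+5) * (y*5+6) * (y*5+7) = 5^5 * ((3/5 + y) * (4/5 + y) * (y + 1) * (6/5 + y) * (7/5 + y))"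
      by (simp add: field_simps)
    then show ?thesis by (simp only: mult.assoc)
  qed
  also have "\<dots> = 2 * 5^(5*Suc m) * (pochhammer (3/5) (Suc m) * pochhammer (4/5) (Suc m) * pochhammer (6/5) (Suc m) * pochhammer (7/5) (Suc m)) * fact (Suc m)"
    unfolding Suc pochhammer_Suc fact_Suc power_add mult_Suc_right of_nat_Suc
    by algebra
  finally show ?case .
qed

lemma alg: fixes a a' b b' y Y F q f :: complex
  shows "5*(a*a'/(b*b')*(y^2*Y)/(2*F*q*f)) = a/b*(5*y^2/2)*(a'/(q*b')*(Y/F)/f)"
  unfolding divide_inverse inverse_mult_distrib by algebra

lemma root_sum:
  fixes j :: nat
  defines "\<alpha> \<equiv> exp (2 * complex_of_real pi * \<i> / 5)"
  shows "(\<Sum>k<5::nat. (\<alpha>^j)^k) = (if 5 dvd j then 5 else 0)"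
proof -
  have a5: "\<alpha>^5 = 1" unfolding \<alpha>_def exp_of_nat_mult[symmetric]
    by (simp add: exp_eq_1)
  show ?thesis
  proof (cases "5 dvd j")
    case True
    then obtain t where "j = 5*t" by auto
    then have "\<alpha>^j = 1" by (simp add: power_mult a5)
    then show ?thesis using True by simp
  next
    case False
    have "\<alpha>^j \<noteq> 1"
    proof
      assume "\<alpha>^j = 1"
      then have "exp (of_nat j * (2 * complex_of_real pi * \<i> / 5)) = 1"
        unfolding \<alpha>_def exp_of_nat_mult .
      then obtain n :: int where "real j * (2 * pi) / 5 = of_int (2*n) * pi"
        by (auto simp: exp_eq_1)
      then have "real j = 5 * of_int n" by (simp add: field_simps)
      then have "int j = 5 * n" by linarith
      then show False using False by presburger
    qed
    then have "(\<Sum>k<5::nat. (\<alpha>^j)^k) = (1 - (\<alpha>^j)^5) / (1 - \<alpha>^j)"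
      by (simp add: sum_gp_strict)
    also have "(\<alpha>^j)^5 = (\<alpha>^5)^j" by (simp only: power_mult[symmetric] mult.commute)
    also have "\<dots> = 1" by (simp add: a5)
    finally show ?thesis using False by simp
  qed
qed

theorem theorem6:
  fixes c x :: complex and as bs :: "(complex \<times> real) list"
  defines "\<alpha> \<equiv> exp (2 * complex_of_real pi * \<i> / 5)"
  defines "as' \<equiv> map fw_shift as"
  defines "bs' \<equiv> [(3/5, 1), (4/5, 1), (6/5, 1), (7/5, 1)] @ map fw_shift bs"
  assumes ok: "fw_ok as bs"
    and ok2: "\<forall>(a, A)\<in>set as. poch_ok a (2 * A)"
    and ok3: "\<forall>(b, B)\<in>set bs. poch_ok b (2 * B)"
    and ok': "fw_ok as' bs'"
    and conv: "\<forall>k<5::nat. summable (fw_term as bs (c * (x * \<alpha> ^ k)\<^sup>2))"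
    and conv': "summable (fw_term as' bs' ((c * x\<^sup>2 / 5) ^ 5))"
  shows "(\<Sum>k<5::nat. \<alpha> ^ k * FoxWright as bs (c * (x * \<alpha> ^ k)\<^sup>2)) =
     (\<Prod>(a, A)\<leftarrow>as. fpoch a (2 * A)) / (\<Prod>(b, B)\<leftarrow>bs. fpoch b (2 * B))
       * (5 * c\<^sup>2 * x ^ 4 / 2) * FoxWright as' bs' ((c * x\<^sup>2 / 5) ^ 5)"
proof -
  define z where "z = c * x\<^sup>2"
  define w where "w = (c * x\<^sup>2 / 5) ^ 5"
  define Pa2 where "Pa2 = (\<Prod>(a, A)\<leftarrow>as. fpoch a (2 * A))"
  define Pb2 where "Pb2 = (\<Prod>(b, B)\<leftarrow>bs. fpoch b (2 * B))"
  define K where "K = Pa2 / Pb2 * (5 * c\<^sup>2 * x ^ 4 / 2)"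
  define T where "T = fw_term as bs z"
  define g where "g = (\<lambda>n. \<Sum>k<5::nat. \<alpha> ^ k * fw_term as bs (c * (x * \<alpha> ^ k)\<^sup>2) n)"
  have gs: "g sums (\<Sum>k<5::nat. \<alpha> ^ k * FoxWright as bs (c * (x * \<alpha> ^ k)\<^sup>2))"
    unfolding g_def FoxWright_def
    by (intro sums_sum sums_mult summable_sums) (use conv in auto)
  have term_k: "fw_term as bs (c * (x * \<alpha> ^ k)\<^sup>2) n = T n * (\<alpha>^(2*n))^k" for k n
    unfolding T_def fw_term_def z_def
    by (simp add: power_mult_distrib power_mult[symmetric] mult_ac)
  have g_eq: "g n = (if n mod 5 = 2 then 5 * T n else 0)" for n
  proof -
    have "g n = T n * (\<Sum>k<5::nat. (\<alpha>^(2*n+1))^k)"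
      unfolding g_def term_k sum_distrib_left
      by (intro sum.cong refl) (simp add: power_add power_mult_distrib mult_ac)
    also have "\<dots> = T n * (if 5 dvd (2*n+1) then 5 else 0)"
      unfolding \<alpha>_def by (subst root_sum) simp
    also have "(5 dvd (2*n+1)) = (n mod 5 = 2)" by presburger
    finally show ?thesis by simp
  qed
  have key: "g (5*m+2) = K * fw_term as' bs' w m" for m
  proof -
    have sa: "(\<Prod>(a, A)\<leftarrow>as. fpoch a (real (5*m+2) * A)) = Pa2 * (\<Prod>(a, A)\<leftarrow>as'. fpoch a (real m * A))"
      unfolding Pa2_def as'_def
      apply (unfold map_map, rule prod_list_split)
      subgoal for p using ok ok2 fpoch_split[of "snd p" "fst p" m]
        by (cases p) (auto simp: fw_ok_def fw_shift_def)
      done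
    have sb: "(\<Prod>(b, B)\<leftarrow>bs. fpoch b (real (5*m+2) * B)) = Pb2 * (\<Prod>(b, B)\<leftarrow>map fw_shift bs. fpoch b (real m * B))"
      unfolding Pb2_def
      apply (unfold map_map, rule prod_list_split)
      subgoal premises pr for p
      proof -
        have "snd p \<noteq> 0" "poch_ok (fst p) (2 * snd p)"
          using ok ok3 pr unfolding fw_ok_def by (auto simp: case_prod_beta)
        from fpoch_split[OF this, of m] show ?thesis by (cases p) (simp add: fw_shift_def)
      qed
      done
    have p4: "(\<Prod>(b, B)\<leftarrow>bs'. fpoch b (real m * B)) =
       (pochhammer (3/5) m * pochhammer (4/5) m * pochhammer (6/5) m * pochhammer (7/5) m)
       * (\<Prod>(b, B)\<leftarrow>map fw_shift bs. fpoch b (real m * B))"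
    proof -
      have po: "poch_ok l (real 1 * 1)" if "(l, 1) \<in> set bs'" for l
      proof -
        have "\<forall>p\<in>set bs'. (case p of (b, B) \<Rightarrow> B \<noteq> 0 \<and> (\<forall>n::nat. poch_ok b (real n * B)))"
          using ok' unfolding fw_ok_def by blast
        from bspec[OF this that] have "\<forall>n::nat. poch_ok l (real n * 1)" by simp
        then show ?thesis by blast
      qed
      have f3: "fpoch (3/5) (real m * 1) = pochhammer (3/5) m"
        by (rule fpoch_nat, rule po) (simp add: bs'_def)
      have f4: "fpoch (4/5) (real m * 1) = pochhammer (4/5) m"
        by (rule fpoch_nat, rule po) (simp add: bs'_def)
      have f6: "fpoch (6/5) (real m * 1) = pochhammer (6/5) m"
        by (rule fpoch_nat, rule po) (simp add: bs'_def)
      have f7: "fpoch (7/5) (real m * 1) = pochhammer (7/5) m"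
        by (rule fpoch_nat, rule po) (simp add: bs'_def)
      show ?thesis unfolding bs'_def map_append prod_list.append list.map prod_list.Cons prod_list.Nil
          case_prod_conv f3 f4 f6 f7 by (simp only: mult.assoc mult_1_right)
    qed
    define Q :: complex where "Q = pochhammer (3/5) m * pochhammer (4/5) m * pochhammer (6/5) m * pochhammer (7/5) m"
    define Pa' where "Pa' = (\<Prod>(a, A)\<leftarrow>as'. fpoch a (real m * A))"
    define Pb' where "Pb' = (\<Prod>(b, B)\<leftarrow>map fw_shift bs. fpoch b (real m * B))"
    have md: "(5*m+2) mod 5 = (2::nat)" by presburger
    have g5: "g (5*m+2) = 5 * T (5*m+2)" unfolding g_eq md by simp
    have zp: "z^(5*m+2) = z^2 * (z^5)^m" by (metis power_add power_mult mult.commute)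
    have fp: "(5::complex)^(5*m) = (5^5)^m" by (simp only: power_mult)
    have wp: "w^m = (z^5)^m / (5^5)^m" unfolding w_def z_def by (simp only: power_divide)
    have cp: "c\<^sup>2 * x ^ 4 = z^2" unfolding z_def by (simp add: power_mult_distrib power_mult[symmetric])
    have cp': "5 * c\<^sup>2 * x ^ 4 / 2 = 5 * z^2 / 2" using cp by (simp add: mult.assoc)
    have "T (5*m+2) = Pa2 * Pa' / (Pb2 * Pb') * z^(5*m+2) / fact (5*m+2)"
      unfolding T_def fw_term_def sa sb Pa'_def Pb'_def by (simp only: of_nat_fact)
    then have "g (5*m+2) = 5 * (Pa2 * Pa' / (Pb2 * Pb') * (z^2 * (z^5)^m) / (2 * (5^5)^m * Q * fact m))"
      unfolding g5 zp fact_5 fp Q_def by (simp only: mult.assoc)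
    also have "\<dots> = K * (Pa' / (Q * Pb') * w ^ m / fact m)"
      unfolding K_def wp cp' by (rule alg)
    also have "\<dots> = K * fw_term as' bs' w m"
      unfolding fw_term_def p4 Pa'_def Pb'_def Q_def by (simp only: of_nat_fact)
    finally show ?thesis .
  qed
  have "(\<lambda>m. g (5*m+2)) sums (K * FoxWright as' bs' w)"
  proof -
    have cw: "summable (fw_term as' bs' w)" using conv' unfolding w_def .
    show ?thesis unfolding key FoxWright_def by (intro sums_mult summable_sums cw)
  qed
  then have "g sums (K * FoxWright as' bs' w)"
  proof (subst (asm) sums_mono_reindex)
    show "strict_mono (\<lambda>m::nat. 5*m+2)" by (auto intro: strict_monoI)
    fix n assume "n \<notin> range (\<lambda>m::nat. 5*m+2)"
    then have "n mod 5 \<noteq> 2"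
    proof (rule contrapos_nn)
      assume "n mod 5 = 2"
      then have "n = 5 * (n div 5) + 2" by presburger
      then show "n \<in> range (\<lambda>m::nat. 5*m+2)" by (rule range_eqI)
    qed
    then show "g n = 0" by (simp add: g_eq)
  qed
  from sums_unique2[OF gs this] show ?thesis unfolding K_def Pa2_def Pb2_def w_def .
qed

end
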